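(* Let $f(\mathbf{x})=\mathbf{x}^{T}A\mathbf{x}+b^{T}\mathbf{x}+1$ with $A\in\mathbb{R}^{n\times n}$ symmetric and $b\in\mathbb{R}^n$. Then there exist $k\ge1$ and real diagonal $k\times k$ matrices $A_1,\dots,A_n$ with $f(\mathbf{x})=\det(I_k+x_1A_1+\dots+x_nA_n)$ if and only if $A-\frac14bb^{T}$ is negative semidefinite and $\operatorname{rank}(A-\frac14bb^{T})\le 1$. *)

theory Defs
  imports "HOL-Analysis.Analysis" "Jordan_Normal_Form.Determinant"
begin

definition neg_semidef :: "real^'n^'n \<Rightarrow> bool" where
  "neg_semidef M \<longleftrightarrow> (\<forall>x. x \<bullet> (M *v x) \<le> 0)"

definition pencil :: "nat \<Rightarrow> ('n::finite \<Rightarrow> real Matrix.mat) \<Rightarrow> real^'n \<Rightarrow> real Matrix.mat" where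
  "pencil k Ad x = Matrix.mat k k (\<lambda>(r,c). (if r = c then 1 else 0) + (\<Sum>i\<in>UNIV. x $ i * (Ad i $$ (r,c))))"

end

theory Submission
  imports Defs "HOL-Computational_Algebra.Polynomial"
begin

context
begin
no_notation Matrix.vec_index (infixl "$" 100)
no_notation Matrix.scalar_prod (infix "\<bullet>" 70)

lemma poly_count:
  fixes c :: "nat \<Rightarrow> real"
  assumes h: "\<And>t. (\<Prod>r<k. 1 + t * c r) = \<alpha>*t^2 + \<beta>*t + 1"
  shows "card {r. r<k \<and> c r \<noteq> 0} \<le> 2"
proof -
  let ?P = "\<Prod>r<k. [:1, c r:]"
  have "poly ?P = poly [:1,\<beta>,\<alpha>:]"
  proof
    fix t show "poly ?P t = poly [:1,\<beta>,\<alpha>:] t"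
      using h[of t] by (simp add: poly_prod power2_eq_square algebra_simps)
  qed
  hence eq: "?P = [:1,\<beta>,\<alpha>:]" by (simp add: poly_eq_poly_eq_iff)
  have "degree ?P = (\<Sum>r<k. degree [:1, c r:])"
    by (rule degree_prod_eq_sum_degree) auto
  also have "\<dots> = (\<Sum>r<k. if c r = 0 then 0 else 1)"
    by (rule sum.cong) auto
  also have "\<dots> = card {r. r<k \<and> c r \<noteq> 0}"
    by (simp add: sum.If_cases) (rule arg_cong[where f=card], auto)
  finally have "card {r. r<k \<and> c r \<noteq> 0} = degree [:1,\<beta>,\<alpha>:]" using eq by simp
  also have "\<dots> \<le> 2" by (simp add: degree_pCons_le le_trans)
  finally show ?thesis .
qed

lemma generic:
  fixes W :: "(real^'n) set"
  assumes "finite W" "0 \<notin> W"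
  shows "\<exists>y. \<forall>w\<in>W. w \<bullet> y \<noteq> 0"
  using assms
proof (induction W rule: finite_induct)
  case empty then show ?case by auto
next
  case (insert w0 W)
  then obtain y where y: "\<forall>w\<in>W. w \<bullet> y \<noteq> 0" by auto
  let ?B = "(\<lambda>w. - (w \<bullet> y) / (w \<bullet> w0)) ` insert w0 W"
  have "finite ?B" using insert by auto
  then obtain s where s: "s \<notin> ?B" using ex_new_if_finite[OF infinite_UNIV_char_0] by blast
  have w0: "w0 \<bullet> w0 \<noteq> 0" using insert by auto
  show ?case
  proof (intro exI ballI)
    fix w assume w: "w \<in> insert w0 W"
    show "w \<bullet> (y + s *\<^sub>R w0) \<noteq> 0"
    proof (cases "w \<bullet> w0 = 0")
      case True
      then have "w \<in> W" using w w0 by auto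
      then show ?thesis using y True by (simp add: inner_add_right)
    next
      case False
      have "s \<noteq> - (w \<bullet> y) / (w \<bullet> w0)" using s w by auto
      then show ?thesis using False by (simp add: inner_add_right field_simps)
    qed
  qed
qed
lemma det_pencil:
  assumes "\<forall>i. Ad i \<in> carrier_mat k k \<and> diagonal_mat (Ad i)"
  shows "Determinant.det (pencil k Ad x) = (\<Prod>r<k. 1 + (\<chi> i. Ad i $$ (r,r)) \<bullet> x)"
proof -
  have C: "pencil k Ad x \<in> carrier_mat k k" by (simp add: pencil_def)
  have off: "\<And>r c. r < k \<Longrightarrow> c < k \<Longrightarrow> r \<noteq> c \<Longrightarrow> Ad i $$ (r,c) = 0" for i
    using assms unfolding diagonal_mat_def carrier_mat_def by auto
  have U: "upper_triangular (pencil k Ad x)"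
    unfolding upper_triangular_def using off by (auto simp: pencil_def)
  have "Determinant.det (pencil k Ad x) = (\<Prod>r = 0..<k. pencil k Ad x $$ (r,r))"
    using det_upper_triangular[OF U C] by (simp add: prod_list_diag_prod pencil_def)
  also have "\<dots> = (\<Prod>r<k. 1 + (\<chi> i. Ad i $$ (r,r)) \<bullet> x)"
    by (rule prod.cong) (auto simp: pencil_def inner_vec_def inner_real_def mult.commute)
  finally show ?thesis .
qed

lemma outer_form: fixes x b :: "real^'n" shows "x \<bullet> ((\<chi> i j. b$i * b$j) *v x) = (b \<bullet> x)^2"
proof -
  have "(\<chi> i j. b$i * b$j) *v x = (b \<bullet> x) *\<^sub>R b"
    by (simp add: Finite_Cartesian_Product.vec_eq_iff matrix_vector_mult_def inner_vec_def sum_distrib_left mult_ac)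
  then show ?thesis by (simp add: inner_commute power2_eq_square)
qed

lemma M_form: fixes x :: "real^'n" and A B :: "real^'n^'n" shows "x \<bullet> ((A - c *\<^sub>R B) *v x) = x \<bullet> (A *v x) - c * (x \<bullet> (B *v x))"
  by (simp add: matrix_vector_mult_diff_rdistrib scaleR_matrix_vector_assoc[symmetric] inner_diff_right)

lemma axis_form: fixes S :: "real^'n^'n" shows "axis p 1 \<bullet> (S *v axis q 1) = S$p$q"
  by (simp add: matrix_vector_mult_basis inner_axis' column_def)

lemma polar:
  fixes S :: "real^'n^'n"
  assumes "transpose S = S" "\<forall>x. x \<bullet> (S *v x) = 0"
  shows "S = 0"
proof -
  have sym: "S$i$j = S$j$i" for i j using assms(1) by (metis Finite_Cartesian_Product.transpose_def vec_lambda_beta)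
  have diag: "S$i$i = 0" for i
    using assms(2)[rule_format, of "axis i 1"] by (simp add: axis_form)
  show ?thesis
    unfolding Finite_Cartesian_Product.vec_eq_iff
  proof (intro allI)
    fix i j
    show "S$i$j = 0$i$j"
    proof (cases "i = j")
      case True then show ?thesis using diag by simp
    next
      case False
      have "(axis i 1 + axis j 1) \<bullet> (S *v (axis i 1 + axis j 1)) = S$i$i + S$i$j + S$j$i + S$j$j"
        by (simp add: matrix_vector_right_distrib inner_add_left inner_add_right axis_form)
      then show ?thesis using assms(2) diag sym by simp
    qed
  qed
qed

lemma rank_outer:
  fixes v :: "real^'n"
  shows "rank (\<chi> i j. c * (v$i * v$j)) \<le> 1"
proof -
  have "Finite_Cartesian_Product.rows (\<chi> i j. c * (v$i * v$j)) \<subseteq> span {v::real^'n}"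
  proof
    fix r assume "r \<in> Finite_Cartesian_Product.rows (\<chi> i j. c * (v$i * v$j))"
    then obtain i where "r = Finite_Cartesian_Product.row i (\<chi> i j. c * (v$i * v$j))"
      by (auto simp: Finite_Cartesian_Product.rows_def)
    then have "r = (c * v$i) *\<^sub>R v"
      by (simp add: Finite_Cartesian_Product.row_def Finite_Cartesian_Product.vec_eq_iff)
    then show "r \<in> span {v}" by (simp add: span_singleton) blast
  qed
  then have "dim (Finite_Cartesian_Product.rows (\<chi> i j. c * (v$i * v$j))) \<le> dim (span {v})" by (rule dim_subset)
  also have "\<dots> \<le> card {v}" by (rule dim_le_card) auto
  finally show ?thesis by (simp add: row_rank_def)
qed

lemma rank1_struct:
  fixes M :: "real^'n^'n"
  assumes "rank M \<le> 1"
  shows "\<exists>u c. \<forall>i j. M$i$j = c$i * u$j"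
proof -
  obtain B where B: "B \<subseteq> Finite_Cartesian_Product.rows M" "independent B" "Finite_Cartesian_Product.rows M \<subseteq> span B" "card B = dim (Finite_Cartesian_Product.rows M)"
    using basis_exists by blast
  have fB: "finite B" using B(2) independent_imp_finite by blast
  have "card B \<le> Suc 0" using B(4) assms by (simp add: row_rank_def)
  then have all: "\<forall>a\<in>B. \<forall>b\<in>B. a = b" using card_le_Suc0_iff_eq[OF fB] by blast
  obtain u where Bu: "B \<subseteq> {u}"
  proof (cases "B = {}")
    case True then show ?thesis using that by blast
  next
    case False then obtain a where "a \<in> B" by blast
    then show ?thesis using that all by blast
  qed
  have "\<forall>i. \<exists>ci. Finite_Cartesian_Product.row i M = ci *\<^sub>R u"
  proof
    fix i
    have "Finite_Cartesian_Product.row i M \<in> span B" using B(3) by (auto simp: Finite_Cartesian_Product.rows_def)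
    then have "Finite_Cartesian_Product.row i M \<in> span {u}" using Bu span_mono by blast
    then show "\<exists>ci. Finite_Cartesian_Product.row i M = ci *\<^sub>R u" by (auto simp: span_singleton)
  qed
  then obtain cf where cf: "\<And>i. Finite_Cartesian_Product.row i M = cf i *\<^sub>R u" by metis
  have "M$i$j = (\<chi> i. cf i)$i * u$j" for i j
  proof -
    have "M$i$j = Finite_Cartesian_Product.row i M $ j" by (simp add: Finite_Cartesian_Product.row_def)
    also have "\<dots> = cf i * u$j" by (simp add: cf)
    finally show ?thesis by simp
  qed
  then show ?thesis by blast
qed

lemma outer_form_c: fixes x v :: "real^'n" shows "x \<bullet> ((\<chi> i j. c * (v$i * v$j)) *v x) = c * (v \<bullet> x)^2"
proof -
  have "(\<chi> i j. c * (v$i * v$j)) = c *\<^sub>R (\<chi> i j. v$i * v$j)"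
    by (simp add: Finite_Cartesian_Product.vec_eq_iff)
  then show ?thesis
    by (simp add: scaleR_matrix_vector_assoc[symmetric] outer_form)
qed

lemma sym_iff: fixes X :: "real^'n^'n" shows "transpose X = X \<longleftrightarrow> (\<forall>i j. X$i$j = X$j$i)"
  by (auto simp: Finite_Cartesian_Product.transpose_def Finite_Cartesian_Product.vec_eq_iff)

lemma forward:
  fixes A :: "real^'n^'n" and b :: "real^'n"
  assumes symA: "transpose A = A"
    and Ad: "\<forall>i. Ad i \<in> carrier_mat k k \<and> diagonal_mat (Ad i)"
    and F0: "\<forall>x::real^'n. x \<bullet> (A *v x) + b \<bullet> x + 1 = Determinant.det (pencil k Ad x)"
  shows "neg_semidef (A - (1/4) *\<^sub>R (\<chi> i j. b $ i * b $ j)) \<and>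
         rank (A - (1/4) *\<^sub>R (\<chi> i j. b $ i * b $ j)) \<le> 1"
proof -
  define w where "w r = (\<chi> i. Ad i $$ (r,r))" for r
  have F: "x \<bullet> (A *v x) + b \<bullet> x + 1 = (\<Prod>r<k. 1 + w r \<bullet> x)" for x
    using F0 det_pencil[OF Ad] by (simp add: w_def)
  define S where "S = {r. r<k \<and> w r \<noteq> 0}"
  have fS: "finite S" by (simp add: S_def)
  have "0 \<notin> w ` S" by (auto simp: S_def)
  then obtain y where y: "\<forall>z\<in>w ` S. z \<bullet> y \<noteq> 0"
    using generic[of "w ` S"] fS by blast
  have "card {r. r<k \<and> w r \<bullet> y \<noteq> 0} \<le> 2"
  proof (rule poly_count[where \<alpha> = "y \<bullet> (A *v y)" and \<beta> = "b \<bullet> y"])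
    fix t :: real
    have "(t *\<^sub>R y) \<bullet> (A *v (t *\<^sub>R y)) + b \<bullet> (t *\<^sub>R y) + 1 = (\<Prod>r<k. 1 + w r \<bullet> (t *\<^sub>R y))"
      by (rule F)
    then show "(\<Prod>r<k. 1 + t * (w r \<bullet> y)) = y \<bullet> (A *v y) * t^2 + b \<bullet> y * t + 1"
      by (simp add: matrix_vector_mult_scaleR power2_eq_square algebra_simps)
  qed
  moreover have "{r. r<k \<and> w r \<bullet> y \<noteq> 0} = S"
    using y by (auto simp: S_def)
  ultimately have cS: "card S \<le> 2" by simp
  have prodS: "(\<Prod>r<k. 1 + w r \<bullet> x) = (\<Prod>r\<in>S. 1 + w r \<bullet> x)" for x
    by (rule prod.mono_neutral_right) (auto simp: S_def)
  obtain p q :: "real^'n" where PQ: "\<And>x. (\<Prod>r\<in>S. 1 + w r \<bullet> x) = (1 + p \<bullet> x) * (1 + q \<bullet> x)"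
  proof -
    have "card S = 0 \<or> card S = Suc 0 \<or> card S = 2" using cS by linarith
    moreover
    { assume "card S = 0" then have "S = {}" using fS by simp
      then have ?thesis using that[of 0 0] by simp }
    moreover
    { assume "card S = Suc 0" then obtain a where "S = {a}" by (auto simp: card_1_singleton_iff)
      then have ?thesis using that[of "w a" 0] by simp }
    moreover
    { assume "card S = 2" then obtain a c where "S = {a,c}" "a \<noteq> c" by (auto simp: card_2_iff)
      then have ?thesis using that[of "w a" "w c"] by simp }
    ultimately show ?thesis by blast
  qed
  have G: "x \<bullet> (A *v x) + b \<bullet> x + 1 = (1 + p \<bullet> x) * (1 + q \<bullet> x)" for x
    using F prodS PQ by simp
  have lin: "b \<bullet> x = p \<bullet> x + q \<bullet> x" and quad: "x \<bullet> (A *v x) = (p \<bullet> x) * (q \<bullet> x)" for x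
  proof -
    have g1: "x \<bullet> (A *v x) + b \<bullet> x + 1 = (1 + p \<bullet> x) * (1 + q \<bullet> x)" by (rule G)
    have g2: "((-1::real) *\<^sub>R x) \<bullet> (A *v ((-1::real) *\<^sub>R x)) + b \<bullet> ((-1::real) *\<^sub>R x) + 1 = (1 + p \<bullet> ((-1::real) *\<^sub>R x)) * (1 + q \<bullet> ((-1::real) *\<^sub>R x))" by (rule G)
    then have g2: "x \<bullet> (A *v x) - b \<bullet> x + 1 = (1 - p \<bullet> x) * (1 - q \<bullet> x)"
      by (simp add: matrix_vector_mult_scaleR[of A "-1" x, simplified])
    show "b \<bullet> x = p \<bullet> x + q \<bullet> x" "x \<bullet> (A *v x) = (p \<bullet> x) * (q \<bullet> x)"
      using g1 g2 by (simp_all add: algebra_simps)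
  qed
  define M where "M = A - (1/4) *\<^sub>R (\<chi> i j. b $ i * b $ j)"
  define v where "v = (1/2) *\<^sub>R (p - q)"
  define N where "N = (\<chi> i j. (-1::real) * (v$i * v$j))"
  have formM: "x \<bullet> (M *v x) = - ((v \<bullet> x) ^ 2)" for x
  proof -
    have "x \<bullet> (M *v x) = (p \<bullet> x) * (q \<bullet> x) - (1/4) * (p \<bullet> x + q \<bullet> x)^2"
      unfolding M_def M_form outer_form quad using lin[of x] by simp
    also have "\<dots> = - ((v \<bullet> x) ^ 2)"
      by (simp add: v_def inner_diff_left power2_eq_square algebra_simps)
    finally show ?thesis .
  qed
  have formN: "x \<bullet> (N *v x) = - ((v \<bullet> x) ^ 2)" for x
    unfolding N_def outer_form_c by simp
  have "M - N = 0"
  proof (rule polar)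
    show "transpose (M - N) = M - N"
      using symA unfolding sym_iff by (simp add: M_def N_def mult.commute)
    show "\<forall>x. x \<bullet> ((M - N) *v x) = 0"
      by (simp add: matrix_vector_mult_diff_rdistrib inner_diff_right formM formN)
  qed
  then have MN: "M = N" by simp
  have "neg_semidef M" unfolding neg_semidef_def formM by simp
  moreover have "rank M \<le> 1" unfolding MN N_def by (rule rank_outer)
  ultimately show ?thesis by (simp add: M_def)
qed

lemma backward:
  fixes A :: "real^'n^'n" and b :: "real^'n"
  assumes symA: "transpose A = A"
    and nsd: "neg_semidef (A - (1/4) *\<^sub>R (\<chi> i j. b $ i * b $ j))"
    and rk: "rank (A - (1/4) *\<^sub>R (\<chi> i j. b $ i * b $ j)) \<le> 1"
  shows "\<exists>k::nat. k \<ge> 1 \<and> (\<exists>Ad :: 'n \<Rightarrow> real Matrix.mat.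
            (\<forall>i. Ad i \<in> carrier_mat k k \<and> diagonal_mat (Ad i)) \<and>
            (\<forall>x::real^'n. x \<bullet> (A *v x) + b \<bullet> x + 1 = Determinant.det (pencil k Ad x)))"
proof -
  define M where "M = A - (1/4) *\<^sub>R (\<chi> i j. b $ i * b $ j)"
  have symM: "M$i$j = M$j$i" for i j
    using symA unfolding sym_iff by (simp add: M_def mult.commute)
  obtain u c :: "real^'n" where uc: "\<And>i j. M$i$j = c$i * u$j"
    using rank1_struct[of M] rk by (auto simp: M_def)
  obtain v :: "real^'n" where formM: "\<And>x::real^'n. x \<bullet> (M *v x) = - ((v \<bullet> x) ^ 2)"
  proof (cases "u = 0")
    case True
    then have "M = 0" using uc by (simp add: Finite_Cartesian_Product.vec_eq_iff)
    then show ?thesis using that[of 0] by simp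
  next
    case False
    then obtain j0 where j0: "u$j0 \<noteq> 0" by (auto simp: Finite_Cartesian_Product.vec_eq_iff)
    define l where "l = c$j0 / u$j0"
    have ci: "c$i = l * u$i" for i
    proof -
      have "c$i * u$j0 = c$j0 * u$i" using uc symM by metis
      then show ?thesis using j0 by (simp add: l_def field_simps)
    qed
    have Mform: "M = (\<chi> i j. l * (u$i * u$j))"
      by (simp add: Finite_Cartesian_Product.vec_eq_iff uc ci)
    have fx: "x \<bullet> (M *v x) = l * (u \<bullet> x)^2" for x
      unfolding Mform by (rule outer_form_c)
    have "u \<bullet> (M *v u) \<le> 0" using nsd by (simp add: neg_semidef_def M_def)
    moreover have "u \<bullet> u > 0" using False by simp
    ultimately have "l \<le> 0" using fx[of u] by (simp add: mult_le_0_iff)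
    show ?thesis
    proof (rule that[of "sqrt (-l) *\<^sub>R u"])
      fix x
      have "(sqrt (-l) *\<^sub>R u \<bullet> x)^2 = (sqrt (-l))^2 * (u \<bullet> x)^2"
        by (simp add: power_mult_distrib)
      also have "\<dots> = -l * (u \<bullet> x)^2" using \<open>l \<le> 0\<close> by simp
      finally show "x \<bullet> (M *v x) = - ((sqrt (-l) *\<^sub>R u \<bullet> x) ^ 2)" using fx by simp
    qed
  qed
  define Ad where "Ad i = Matrix.mat 2 2 (\<lambda>(r,s). if r = s then (if r = 0 then b$i/2 - v$i else b$i/2 + v$i) else 0)" for i
  have Adp: "\<forall>i. Ad i \<in> carrier_mat 2 2 \<and> diagonal_mat (Ad i)"
    by (simp add: Ad_def diagonal_mat_def)
  have "x \<bullet> (A *v x) + b \<bullet> x + 1 = Determinant.det (pencil 2 Ad x)" for x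
  proof -
    have w0: "(\<chi> i. Ad i $$ (0,0)) = (1/2) *\<^sub>R b - v"
      by (simp add: Ad_def Finite_Cartesian_Product.vec_eq_iff)
    have w1: "(\<chi> i. Ad i $$ (1,1)) = (1/2) *\<^sub>R b + v"
      by (simp add: Ad_def Finite_Cartesian_Product.vec_eq_iff)
    have "Determinant.det (pencil 2 Ad x) = (\<Prod>r<2. 1 + (\<chi> i. Ad i $$ (r,r)) \<bullet> x)"
      by (rule det_pencil[OF Adp])
    also have "\<dots> = (1 + (\<chi> i. Ad i $$ (0,0)) \<bullet> x) * (1 + (\<chi> i. Ad i $$ (1,1)) \<bullet> x)"
      by (simp add: numeral_2_eq_2 lessThan_Suc)
    also have "\<dots> = (1 + (1/2) * (b \<bullet> x) - v \<bullet> x) * (1 + (1/2) * (b \<bullet> x) + v \<bullet> x)"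
      unfolding w0 w1 by (simp add: inner_diff_left inner_add_left algebra_simps)
    also have "\<dots> = x \<bullet> (A *v x) + b \<bullet> x + 1"
    proof -
      have "x \<bullet> (M *v x) = x \<bullet> (A *v x) - (1/4) * (b \<bullet> x)^2"
        unfolding M_def M_form outer_form ..
      then show ?thesis using formM[of x] by (simp add: power2_eq_square algebra_simps)
    qed
    finally show ?thesis by simp
  qed
  then show ?thesis using Adp by (intro exI[of _ 2]) auto
qed

lemma main_aux:
  fixes A :: "real^'n^'n" and b :: "real^'n"
  assumes "Finite_Cartesian_Product.transpose A = A"
  shows "(\<exists>k::nat. k \<ge> 1 \<and> (\<exists>Ad :: 'n \<Rightarrow> real Matrix.mat.
            (\<forall>i. Ad i \<in> carrier_mat k k \<and> diagonal_mat (Ad i)) \<and>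
            (\<forall>x::real^'n. x \<bullet> (A *v x) + b \<bullet> x + 1 = Determinant.det (pencil k Ad x))))
     \<longleftrightarrow> neg_semidef (A - (1/4) *\<^sub>R (\<chi> i j. b $ i * b $ j)) \<and>
         rank (A - (1/4) *\<^sub>R (\<chi> i j. b $ i * b $ j)) \<le> 1"
  using forward[OF assms] backward[OF assms] by blast

end

theorem mainTheorem9:
  fixes A :: "real^'n^'n" and b :: "real^'n"
  assumes "Finite_Cartesian_Product.transpose A = A"
  shows "(\<exists>k::nat. k \<ge> 1 \<and> (\<exists>Ad :: 'n \<Rightarrow> real Matrix.mat.
            (\<forall>i. Ad i \<in> carrier_mat k k \<and> diagonal_mat (Ad i)) \<and>
            (\<forall>x::real^'n. x \<bullet> (A *v x) + b \<bullet> x + 1 = Determinant.det (pencil k Ad x))))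
     \<longleftrightarrow> neg_semidef (A - (1/4) *\<^sub>R (\<chi> i j. b $ i * b $ j)) \<and>
         rank (A - (1/4) *\<^sub>R (\<chi> i j. b $ i * b $ j)) \<le> 1"
  by (rule main_aux[OF assms])

end
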